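(* Let $n\geq1$, $N=n+1$, and let $x\in CF(N)$ satisfy $\pi(x)\in\mathrm{Ker}(\partial_n)$. Then $x$ can be written uniquely as $$x=\big[(1,1,u)+(-1,-1,u)+(-1,1,v)+(1,-1,v)+(1,1,w)+(-1,1,w)\big]+(1,1,t)$$ with $u,v,w\in CF(n)$ and $t\in\mathrm{Ker}(\partial_n)$. Moreover, $\partial_N(x)=0$ if and only if $$\partial_nv=w+t+\eta_n w,\qquad \partial_nu=w+\eta_n t+\eta_n w,\qquad \partial_nw=0.$$
   Context: For $m\geq1$, $CF(m)$ is the $\mathbb{Z}_2$-vector space with basis the tuples $(\epsilon_1,\dots,\epsilon_{2m-1})\in\{\pm1\}^{2m-1}$. Linear maps $\eta_m,\tilde\partial_m:CF(m)\to CF(m)$ are given on basis elements by $\eta_m(\epsilon_1,\dots,\epsilon_{2m-1})=(-\epsilon_1,\dots,-\epsilon_{2m-1})$ and $\tilde\partial_m(\epsilon_1,\dots,\epsilon_{2m-1})=\sum_{i=1}^{2m-1}(\epsilon_1,\dots,-\epsilon_i,\dots,\epsilon_{2m-1})$, and $\partial_m=\tilde\partial_m+\eta_m$. $\pi:CF(N)\to CF(n)$ removes the first two coordinates of a basis tuple, extended linearly. For $a,b\in\{\pm1\}$ and $y\in CF(n)$, $(a,b,y)\in CF(N)$ denotes the element obtained by prefixing $(a,b)$ to every basis tuple in $y$, extended linearly (e.g. $(a,b,y_1+y_2)=(a,b,y_1)+(a,b,y_2)$). *)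

theory Defs
  imports Main
begin

text \<open>An element of the Z_2-vector space CF(m) is encoded as the (finite)
set of basis tuples having coefficient 1. Addition is symmetric difference.\<close>

definition cf_basis :: "nat \<Rightarrow> int list set" where
  "cf_basis m = {e. length e = 2*m - 1 \<and> set e \<subseteq> {1, -1}}"

definition CF :: "nat \<Rightarrow> int list set set" where
  "CF m = Pow (cf_basis m)"

definition cf_add :: "int list set \<Rightarrow> int list set \<Rightarrow> int list set" where
  "cf_add A B = (A - B) \<union> (B - A)"

text \<open>Z_2-linear extension of a map sending a basis tuple to a formal sum of basis
tuples (given as a list of summands): the coefficient of y in the image of A is the
parity of the total number of occurrences of y.\<close>

definition cf_lin :: "(int list \<Rightarrow> int list list) \<Rightarrow> int list set \<Rightarrow> int list set" where
  "cf_lin f A = {y. odd (\<Sum>e\<in>A. count_list (f e) y)}"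

definition cf_eta :: "int list set \<Rightarrow> int list set" where
  "cf_eta = cf_lin (\<lambda>e. [map uminus e])"

definition cf_dtilde :: "int list set \<Rightarrow> int list set" where
  "cf_dtilde = cf_lin (\<lambda>e. map (\<lambda>i. e[i := - (e ! i)]) [0..<length e])"

definition cf_d :: "int list set \<Rightarrow> int list set" where
  "cf_d A = cf_add (cf_dtilde A) (cf_eta A)"

definition cf_pi :: "int list set \<Rightarrow> int list set" where
  "cf_pi = cf_lin (\<lambda>e. [drop 2 e])"

definition cf_prefix :: "int \<Rightarrow> int \<Rightarrow> int list set \<Rightarrow> int list set" where
  "cf_prefix a b y = cf_lin (\<lambda>e. [a # b # e]) y"

definition cf_ker :: "nat \<Rightarrow> int list set set" where
  "cf_ker m = {t \<in> CF m. cf_d t = {}}"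

definition cf_decomp :: "int list set \<Rightarrow> int list set \<Rightarrow> int list set \<Rightarrow> int list set \<Rightarrow> int list set" where
  "cf_decomp u v w t =
     cf_add (cf_add (cf_add (cf_add (cf_add (cf_add
       (cf_prefix 1 1 u) (cf_prefix (-1) (-1) u))
       (cf_prefix (-1) 1 v)) (cf_prefix 1 (-1) v))
       (cf_prefix 1 1 w)) (cf_prefix (-1) 1 w))
       (cf_prefix 1 1 t)"

end

theory Submission imports Defs begin

lemma mem_cf_add[simp]: "z \<in> cf_add A B \<longleftrightarrow> (z \<in> A) \<noteq> (z \<in> B)"
  unfolding cf_add_def by auto

lemma finite_cf_add[simp]: "finite A \<Longrightarrow> finite B \<Longrightarrow> finite (cf_add A B)"
  unfolding cf_add_def by auto

lemma finite_cf_lin[simp]: "finite A \<Longrightarrow> finite (cf_lin f A)"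
proof -
  assume fA: "finite A"
  have "cf_lin f A \<subseteq> (\<Union>e\<in>A. set (f e))"
  proof
    fix z assume "z \<in> cf_lin f A"
    hence "odd (\<Sum>e\<in>A. count_list (f e) z)" by (simp add: cf_lin_def)
    hence "(\<Sum>e\<in>A. count_list (f e) z) \<noteq> 0" by (metis even_zero)
    then obtain e where "e\<in>A" "count_list (f e) z \<noteq> 0" by (meson sum.neutral)
    thus "z \<in> (\<Union>e\<in>A. set (f e))" by (auto simp: count_list_0_iff)
  qed
  moreover have "finite (\<Union>e\<in>A. set (f e))" using fA by auto
  ultimately show ?thesis by (rule finite_subset)
qed

lemma cf_lin_add:
  assumes "finite A" "finite B"
  shows "z \<in> cf_lin f (cf_add A B) \<longleftrightarrow> (z \<in> cf_lin f A) \<noteq> (z \<in> cf_lin f B)"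
proof -
  let ?g = "\<lambda>e. count_list (f e) z"
  have 1: "sum ?g (cf_add A B) = sum ?g (A-B) + sum ?g (B-A)"
    unfolding cf_add_def using assms by (intro sum.union_disjoint) auto
  have 2: "sum ?g A = sum ?g (A\<inter>B) + sum ?g (A-B)" by (rule sum.Int_Diff[OF assms(1)])
  have 3: "sum ?g B = sum ?g (B\<inter>A) + sum ?g (B-A)" by (rule sum.Int_Diff[OF assms(2)])
  show ?thesis unfolding cf_lin_def using 1 2 3 by (simp add: Int_commute) argo
qed

lemma cf_lin_single:
  assumes "finite A"
  shows "z \<in> cf_lin (\<lambda>e. [g e]) A \<longleftrightarrow> odd (card {e\<in>A. g e = z})"
proof -
  have "(\<Sum>e\<in>A. count_list [g e] z) = (\<Sum>e\<in>A. of_bool (g e = z))" by (rule sum.cong) auto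
  also have "\<dots> = card (A \<inter> {e. g e = z})" using assms by simp
  finally show ?thesis unfolding cf_lin_def by (simp add: Int_def)
qed

lemma cf_lin_inj:
  assumes "finite A" "inj g"
  shows "z \<in> cf_lin (\<lambda>e. [g e]) A \<longleftrightarrow> (\<exists>e\<in>A. g e = z)"
proof (cases "\<exists>e\<in>A. g e = z")
  case True
  then obtain e0 where e0: "e0 \<in> A" "g e0 = z" by blast
  have "{e\<in>A. g e = z} = {e0}" using e0 assms(2) by (auto dest: injD)
  thus ?thesis using True assms(1) by (simp add: cf_lin_single)
next
  case False
  hence "{e\<in>A. g e = z} = {}" by auto
  hence "card {e\<in>A. g e = z} = 0" by (simp only: card.empty)
  thus ?thesis using False assms(1) by (simp only: cf_lin_single) simp
qed

lemma inj_map_uminus: "inj (map (uminus :: int \<Rightarrow> int))"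
  by (rule inj_mapI) (rule inj_uminus)

lemma mem_eta: "finite A \<Longrightarrow> z \<in> cf_eta A \<longleftrightarrow> map uminus z \<in> A"
  unfolding cf_eta_def
  by (subst cf_lin_inj[OF _ inj_map_uminus]) (auto simp: comp_def intro!: bexI[where x="map uminus z"])

lemma mem_prefix: "finite Y \<Longrightarrow> z \<in> cf_prefix a b Y \<longleftrightarrow> (\<exists>e\<in>Y. z = a#b#e)"
  unfolding cf_prefix_def by (subst cf_lin_inj) (auto intro: injI)

lemma mem_prefix2[simp]: "finite Y \<Longrightarrow> (c#d#r \<in> cf_prefix a b Y) \<longleftrightarrow> (c=a \<and> d=b \<and> r\<in>Y)"
  by (auto simp: mem_prefix)

lemma finite_prefix[simp]: "finite Y \<Longrightarrow> finite (cf_prefix a b Y)"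
  unfolding cf_prefix_def by simp

lemma mem_pi_prefix: "finite S \<Longrightarrow> r \<in> cf_pi (cf_prefix a b S) \<longleftrightarrow> r \<in> S"
proof -
  assume fS: "finite S"
  have "{e \<in> cf_prefix a b S. drop 2 e = r} = (if r \<in> S then {a#b#r} else {})"
    using fS by (auto simp: mem_prefix)
  thus ?thesis using fS unfolding cf_pi_def by (simp add: cf_lin_single)
qed

lemma flip_flip: "i < length (e::int list) \<Longrightarrow> (e[i := -(e!i)])[i := -((e[i := -(e!i)]) ! i)] = e"
  by simp

lemma flip_eq: "((e::int list)[i:=-(e!i)] = z \<and> i < length e) \<longleftrightarrow> (z[i:=-(z!i)] = e \<and> i < length z)"
  by (metis flip_flip length_list_update)

lemma mem_dtilde:
  assumes "finite A"
  shows "z \<in> cf_dtilde A \<longleftrightarrow> odd (card {i. i < length z \<and> z[i := - (z!i)] \<in> A})"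
proof -
  let ?F = "\<lambda>e. {i. i < length z \<and> z[i := - (z!i)] = e}"
  have c: "count_list (map (\<lambda>i. e[i := - (e!i)]) [0..<length e]) z = card (?F e)" for e
  proof -
    have "count_list (map (\<lambda>i. e[i := - (e!i)]) [0..<length e]) z
        = card {i. i < length e \<and> z = e[i := - (e!i)]}"
      unfolding count_list_eq_length_filter length_filter_conv_card
      by (intro arg_cong[where f=card]) auto
    also have "{i. i < length e \<and> z = e[i := - (e!i)]} = ?F e"
    proof (rule Collect_cong)
      fix i show "(i < length e \<and> z = e[i := - (e!i)]) = (i < length z \<and> z[i := - (z!i)] = e)"
        using flip_eq[of e i z] by auto
    qed
    finally show ?thesis .
  qed
  have "(\<Sum>e\<in>A. card (?F e)) = card (\<Union>(?F ` A))"
    using assms by (intro card_UN_disjoint[symmetric]) auto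
  also have "\<Union>(?F ` A) = {i. i < length z \<and> z[i := - (z!i)] \<in> A}" by auto
  finally show ?thesis unfolding cf_dtilde_def cf_lin_def using c by simp
qed

lemma card_Suc_split:
  "card {i. i < Suc m \<and> P i} = card {i. i < m \<and> P (Suc i)} + (if P 0 then 1 else 0)"
proof -
  have e: "{i. i < Suc m \<and> P i} = (if P 0 then {0} else {}) \<union> Suc ` {i. i < m \<and> P (Suc i)}"
    by (auto simp: less_Suc_eq_0_disj)
  show ?thesis unfolding e by (auto simp: card_image)
qed

definition sl :: "int \<Rightarrow> int \<Rightarrow> int list set \<Rightarrow> int list set" where
  "sl a b X = {s. a#b#s \<in> X}"

lemma mem_sl[simp]: "r \<in> sl a b X \<longleftrightarrow> a#b#r \<in> X" by (simp add: sl_def)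

lemma finite_sl[simp]: "finite X \<Longrightarrow> finite (sl a b X)"
  unfolding sl_def by (rule finite_vimageI[where h="\<lambda>s. a#b#s", unfolded vimage_def]) (auto intro: injI)

lemma dtilde_cons2:
  assumes "finite A"
  shows "(a#b#r \<in> cf_dtilde A) \<longleftrightarrow>
     ((((-a)#b#r \<in> A) \<noteq> (a#(-b)#r \<in> A)) \<noteq> (r \<in> cf_dtilde (sl a b A)))"
proof -
  have "card {i. i < length (a#b#r) \<and> (a#b#r)[i := - ((a#b#r)!i)] \<in> A}
     = card {i. i < length r \<and> r[i := - (r!i)] \<in> sl a b A}
       + (if a#(-b)#r \<in> A then 1 else 0) + (if (-a)#b#r \<in> A then 1 else 0)"
    by (simp add: card_Suc_split)
  thus ?thesis using assms by (simp add: mem_dtilde)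
qed


lemma mem_d: "z \<in> cf_d A \<longleftrightarrow> (z \<in> cf_dtilde A) \<noteq> (z \<in> cf_eta A)"
  by (simp add: cf_d_def)

lemma dtilde_add: "finite A \<Longrightarrow> finite B \<Longrightarrow>
   r \<in> cf_dtilde (cf_add A B) \<longleftrightarrow> (r \<in> cf_dtilde A) \<noteq> (r \<in> cf_dtilde B)"
  unfolding cf_dtilde_def by (rule cf_lin_add)

lemma eta_add: "finite A \<Longrightarrow> finite B \<Longrightarrow>
   r \<in> cf_eta (cf_add A B) \<longleftrightarrow> (r \<in> cf_eta A) \<noteq> (r \<in> cf_eta B)"
  unfolding cf_eta_def by (rule cf_lin_add)

lemma pi_add: "finite A \<Longrightarrow> finite B \<Longrightarrow>
   r \<in> cf_pi (cf_add A B) \<longleftrightarrow> (r \<in> cf_pi A) \<noteq> (r \<in> cf_pi B)"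
  unfolding cf_pi_def by (rule cf_lin_add)

lemma finite_basis: "finite (cf_basis m)"
proof -
  have "cf_basis m = {xs. set xs \<subseteq> {1,-1} \<and> length xs = 2*m-1}"
    unfolding cf_basis_def by auto
  thus ?thesis by (simp add: finite_lists_length_eq)
qed

lemma finite_CF: "y \<in> CF m \<Longrightarrow> finite y"
  unfolding CF_def using finite_basis by (auto intro: finite_subset)

definition shp :: "int list \<Rightarrow> bool" where
  "shp z \<longleftrightarrow> (\<exists>a b r. z = a#b#r \<and> a \<in> {1,-1} \<and> b \<in> {1,-1})"

lemma basis_shp: "n \<ge> 1 \<Longrightarrow> z \<in> cf_basis (n+1) \<Longrightarrow> shp z"
proof -
  assume n: "n \<ge> 1" and z: "z \<in> cf_basis (n+1)"
  hence l: "length z \<ge> 2" and s: "set z \<subseteq> {1,-1}" by (auto simp: cf_basis_def)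
  then obtain a b r where "z = a#b#r"
    by (metis Suc_le_length_iff numeral_2_eq_2)
  thus ?thesis using s by (auto simp: shp_def)
qed

lemma shp_flip: "shp y \<Longrightarrow> shp (y[i:=-(y!i)])"
proof -
  assume "shp y"
  then obtain a b r where y: "y = a#b#r" "a \<in> {1,-1}" "b \<in> {1,-1}" by (auto simp: shp_def)
  show ?thesis
  proof (cases i)
    case 0 thus ?thesis using y by (auto simp: shp_def)
  next
    case (Suc j) thus ?thesis using y by (cases j) (auto simp: shp_def)
  qed
qed

lemma dtilde_shape: "finite A \<Longrightarrow> \<forall>y\<in>A. shp y \<Longrightarrow> z \<in> cf_dtilde A \<Longrightarrow> shp z"
proof -
  assume fA: "finite A" and sh: "\<forall>y\<in>A. shp y" and z: "z \<in> cf_dtilde A"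
  hence "odd (card {i. i < length z \<and> z[i := - (z!i)] \<in> A})" by (simp add: mem_dtilde)
  hence "{i. i < length z \<and> z[i := - (z!i)] \<in> A} \<noteq> {}" by (metis card.empty even_zero)
  then obtain i where i: "i < length z" "z[i := - (z!i)] \<in> A" by auto
  hence "shp ((z[i := - (z!i)])[i := - ((z[i := - (z!i)])!i)])" using sh shp_flip by blast
  thus ?thesis using i(1) flip_flip by simp
qed

lemma eta_shape: "finite A \<Longrightarrow> \<forall>y\<in>A. shp y \<Longrightarrow> z \<in> cf_eta A \<Longrightarrow> shp z"
proof -
  assume fA: "finite A" and sh: "\<forall>y\<in>A. shp y" and z: "z \<in> cf_eta A"
  hence "shp (map uminus z)" by (simp add: mem_eta)
  then obtain a b r where "map uminus z = a#b#r" "a \<in> {1,-1}" "b \<in> {1,-1}" by (auto simp: shp_def)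
  thus ?thesis by (auto simp: shp_def Cons_eq_map_conv)
qed

lemma d_cons2:
  assumes "finite A"
  shows "(a#b#r \<in> cf_d A) \<longleftrightarrow>
    (((((-a)#b#r \<in> A) \<noteq> (a#(-b)#r \<in> A)) \<noteq> (r \<in> cf_dtilde (sl a b A)))
      \<noteq> (r \<in> cf_eta (sl (-a) (-b) A)))"
  using assms by (simp add: mem_d dtilde_cons2 mem_eta)

lemma dm:
  assumes "finite u" "finite v" "finite w" "finite t"
  shows "(1#1#r \<in> cf_decomp u v w t) \<longleftrightarrow> (((r\<in>u) \<noteq> (r\<in>w)) \<noteq> (r\<in>t))"
    "((-1)#(-1)#r \<in> cf_decomp u v w t) \<longleftrightarrow> r\<in>u"
    "((-1)#1#r \<in> cf_decomp u v w t) \<longleftrightarrow> (r\<in>v) \<noteq> (r\<in>w)"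
    "(1#(-1)#r \<in> cf_decomp u v w t) \<longleftrightarrow> r\<in>v"
  using assms by (simp_all add: cf_decomp_def)

lemma dm_shape: "finite u \<Longrightarrow> finite v \<Longrightarrow> finite w \<Longrightarrow> finite t \<Longrightarrow>
  z \<in> cf_decomp u v w t \<Longrightarrow> shp z"
  by (auto simp: cf_decomp_def mem_prefix shp_def)

lemma x_eq:
  assumes "finite x" "\<forall>z\<in>x. shp z"
  shows "x = cf_add (cf_add (cf_add (cf_prefix 1 1 (sl 1 1 x)) (cf_prefix 1 (-1) (sl 1 (-1) x)))
      (cf_prefix (-1) 1 (sl (-1) 1 x))) (cf_prefix (-1) (-1) (sl (-1) (-1) x))"
    (is "x = ?R")
proof (rule set_eqI)
  fix z
  show "z \<in> x \<longleftrightarrow> z \<in> ?R"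
  proof (cases "shp z")
    case True
    then obtain a b r where z: "z = a#b#r" "a = 1 \<or> a = -1" "b = 1 \<or> b = -1" by (auto simp: shp_def)
    show ?thesis using z(2,3) assms(1) unfolding z(1) by auto
  next
    case False
    hence "z \<notin> x" using assms by auto
    moreover have "z \<notin> ?R" using False assms(1) by (auto simp: mem_prefix shp_def)
    ultimately show ?thesis by blast
  qed
qed

lemma t_char:
  assumes "finite x" "\<forall>z\<in>x. shp z"
  shows "r \<in> cf_pi x \<longleftrightarrow> ((((1#1#r\<in>x) \<noteq> (1#(-1)#r\<in>x)) \<noteq> ((-1)#1#r\<in>x)) \<noteq> ((-1)#(-1)#r\<in>x))"
  apply (subst x_eq[OF assms])
  using assms(1) by (simp add: pi_add mem_pi_prefix)


lemma sl_CF: "x \<in> CF (n+1) \<Longrightarrow> n \<ge> 1 \<Longrightarrow> sl a b x \<in> CF n"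
  by (force simp: CF_def cf_basis_def sl_def)

lemma add_CF: "A \<in> CF n \<Longrightarrow> B \<in> CF n \<Longrightarrow> cf_add A B \<in> CF n"
  by (auto simp: CF_def cf_add_def)

lemma uniq:
  assumes "finite u" "finite v" "finite w" "finite t" "x = cf_decomp u v w t"
  shows "u = sl (-1) (-1) x \<and> v = sl 1 (-1) x \<and> w = cf_add (sl (-1) 1 x) (sl 1 (-1) x)
     \<and> t = cf_pi x"
proof -
  have fx: "finite x" using assms by (simp add: cf_decomp_def)
  have sx: "\<forall>z\<in>x. shp z" using assms dm_shape by blast
  note d = dm[OF assms(1-4)]
  show ?thesis unfolding assms(5)[symmetric]
    using d t_char[OF fx sx] unfolding assms(5)[symmetric]
    by (auto simp: set_eq_iff; argo)
qed

theorem lemma4p3: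
  fixes n :: nat and x :: "int list set"
  assumes "n \<ge> 1"
    and "x \<in> CF (n + 1)"
    and "cf_pi x \<in> cf_ker n"
  shows "(\<exists>!p. (\<lambda>(u, v, w, t). u \<in> CF n \<and> v \<in> CF n \<and> w \<in> CF n \<and> t \<in> cf_ker n
                     \<and> x = cf_decomp u v w t) p)
       \<and> (\<forall>u v w t. u \<in> CF n \<and> v \<in> CF n \<and> w \<in> CF n \<and> t \<in> cf_ker n
                     \<and> x = cf_decomp u v w t \<longrightarrow>
             (cf_d x = {} \<longleftrightarrow>
               (cf_d v = cf_add (cf_add w t) (cf_eta w)
                \<and> cf_d u = cf_add (cf_add w (cf_eta t)) (cf_eta w)
                \<and> cf_d w = {})))"
proof
  have fx: "finite x" using assms(2) finite_CF by blast
  have sx: "\<forall>z\<in>x. shp z" using assms(1,2) basis_shp by (auto simp: CF_def)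
  define u where "u = sl (-1) (-1) x"
  define v where "v = sl 1 (-1) x"
  define w where "w = cf_add (sl (-1) 1 x) (sl 1 (-1) x)"
  define t where "t = cf_pi x"
  have CFs: "u \<in> CF n" "v \<in> CF n" "w \<in> CF n" "t \<in> cf_ker n"
    unfolding u_def v_def w_def t_def using assms sl_CF add_CF by auto
  have fs: "finite u" "finite v" "finite w" "finite t"
    using CFs finite_CF by (auto simp: cf_ker_def)
  note d = dm[OF fs]
  have xd: "x = cf_decomp u v w t"
  proof (rule set_eqI)
    fix z
    show "z \<in> x \<longleftrightarrow> z \<in> cf_decomp u v w t"
    proof (cases "shp z")
      case True
      then obtain a b r where z: "z = a#b#r" "a = 1 \<or> a = -1" "b = 1 \<or> b = -1" by (auto simp: shp_def)
      show ?thesis using z(2,3) d t_char[OF fx sx, of r] unfolding z(1)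
        by (auto simp: u_def v_def w_def t_def; argo)
    next
      case False
      thus ?thesis using sx dm_shape[OF fs] by blast
    qed
  qed
  show "\<exists>!p. (\<lambda>(u, v, w, t). u \<in> CF n \<and> v \<in> CF n \<and> w \<in> CF n \<and> t \<in> cf_ker n
                     \<and> x = cf_decomp u v w t) p"
  proof (rule ex1I[where a="(u,v,w,t)"])
    show "(\<lambda>(u, v, w, t). u \<in> CF n \<and> v \<in> CF n \<and> w \<in> CF n \<and> t \<in> cf_ker n
                     \<and> x = cf_decomp u v w t) (u,v,w,t)" using CFs xd by simp
  next
    fix p assume p: "(\<lambda>(u, v, w, t). u \<in> CF n \<and> v \<in> CF n \<and> w \<in> CF n \<and> t \<in> cf_ker n
                     \<and> x = cf_decomp u v w t) p"
    obtain u' v' w' t' where pe: "p = (u',v',w',t')" by (cases p) auto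
    have "u' \<in> CF n" "v' \<in> CF n" "w' \<in> CF n" "t' \<in> cf_ker n" "x = cf_decomp u' v' w' t'"
      using p pe by auto
    hence "u' = u \<and> v' = v \<and> w' = w \<and> t' = t"
      using uniq[of u' v' w' t' x] finite_CF unfolding u_def v_def w_def t_def cf_ker_def by blast
    thus "p = (u,v,w,t)" using pe by simp
  qed
next
  show "\<forall>u v w t. u \<in> CF n \<and> v \<in> CF n \<and> w \<in> CF n \<and> t \<in> cf_ker n
                     \<and> x = cf_decomp u v w t \<longrightarrow>
             (cf_d x = {} \<longleftrightarrow>
               (cf_d v = cf_add (cf_add w t) (cf_eta w)
                \<and> cf_d u = cf_add (cf_add w (cf_eta t)) (cf_eta w)
                \<and> cf_d w = {}))"
  proof (intro allI impI)
    fix u v w t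
    assume H: "u \<in> CF n \<and> v \<in> CF n \<and> w \<in> CF n \<and> t \<in> cf_ker n \<and> x = cf_decomp u v w t"
    have fs: "finite u" "finite v" "finite w" "finite t"
      using H finite_CF by (auto simp: cf_ker_def)
    have xd: "x = cf_decomp u v w t" using H by blast
    have fx: "finite x" using assms(2) finite_CF by blast
    have sx: "\<forall>z\<in>x. shp z" using assms(1,2) basis_shp by (auto simp: CF_def)
    have kt: "\<And>r. (r \<in> cf_dtilde t) = (r \<in> cf_eta t)"
      using H by (auto simp: cf_ker_def set_eq_iff mem_d)
    note d = dm[OF fs, folded xd]
    have s11: "sl 1 1 x = cf_add (cf_add u w) t" using d by (auto simp: set_eq_iff)
    have s1m: "sl 1 (-1) x = v" using d by (auto simp: set_eq_iff)
    have sm1: "sl (-1) 1 x = cf_add v w" using d by (auto simp: set_eq_iff)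
    have smm: "sl (-1) (-1) x = u" using d by (auto simp: set_eq_iff)
    have shd: "shp z" if "z \<in> cf_d x" for z
      using that dtilde_shape[OF fx sx] eta_shape[OF fx sx] by (auto simp: mem_d)
    have L: "cf_d x = {} \<longleftrightarrow> (\<forall>r. 1#1#r \<notin> cf_d x \<and> 1#(-1)#r \<notin> cf_d x
                 \<and> (-1)#1#r \<notin> cf_d x \<and> (-1)#(-1)#r \<notin> cf_d x)"
    proof
      assume "\<forall>r. 1#1#r \<notin> cf_d x \<and> 1#(-1)#r \<notin> cf_d x
                 \<and> (-1)#1#r \<notin> cf_d x \<and> (-1)#(-1)#r \<notin> cf_d x"
      thus "cf_d x = {}" using shd unfolding shp_def by blast
    qed auto
    have pw: "(1#1#r \<notin> cf_d x \<and> 1#(-1)#r \<notin> cf_d x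
                 \<and> (-1)#1#r \<notin> cf_d x \<and> (-1)#(-1)#r \<notin> cf_d x) \<longleftrightarrow>
        ((r \<in> cf_d v \<longleftrightarrow> r \<in> cf_add (cf_add w t) (cf_eta w))
         \<and> (r \<in> cf_d u \<longleftrightarrow> r \<in> cf_add (cf_add w (cf_eta t)) (cf_eta w))
         \<and> r \<notin> cf_d w)" for r
      using kt[of r] fs fx
      unfolding d_cons2[OF fx]
      by (simp add: d s11 s1m sm1 smm dtilde_add eta_add mem_d) argo
    show "cf_d x = {} \<longleftrightarrow>
               (cf_d v = cf_add (cf_add w t) (cf_eta w)
                \<and> cf_d u = cf_add (cf_add w (cf_eta t)) (cf_eta w)
                \<and> cf_d w = {})"
    proof -
      let ?Q1 = "\<lambda>r. r \<in> cf_d v \<longleftrightarrow> r \<in> cf_add (cf_add w t) (cf_eta w)"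
      let ?Q2 = "\<lambda>r. r \<in> cf_d u \<longleftrightarrow> r \<in> cf_add (cf_add w (cf_eta t)) (cf_eta w)"
      let ?Q3 = "\<lambda>r. r \<notin> cf_d w"
      have "cf_d x = {} \<longleftrightarrow> (\<forall>r. ?Q1 r \<and> ?Q2 r \<and> ?Q3 r)"
        unfolding L by (simp only: pw)
      also have "\<dots> \<longleftrightarrow> (\<forall>r. ?Q1 r) \<and> (\<forall>r. ?Q2 r) \<and> (\<forall>r. ?Q3 r)"
        by (simp only: all_conj_distrib)
      also have "\<dots> \<longleftrightarrow> (cf_d v = cf_add (cf_add w t) (cf_eta w)
                \<and> cf_d u = cf_add (cf_add w (cf_eta t)) (cf_eta w)
                \<and> cf_d w = {})"
        by (simp only: set_eq_iff empty_iff simp_thms)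
      finally show ?thesis .
    qed
  qed
qed

end
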